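(* Let $A$ be a finite tree rooted at $e$, with all arcs directed from the root towards the leaves, let $R\subseteq V(A)$ be a set of destinations containing all leaves of $A$, and let $D\subseteq V(A)$. Let $u\neq e$ be a vertex of $A$ having exactly one child $u_1$, and let $(b,d,\mathrm{load})$ be the window of the solution $\mathcal{S}(D)$ on the arc $a^{u_1}$. Then the window of $\mathcal{S}(D)$ on the arc $a^{u}$ is \[ \begin{cases} (1,\ d+1,\ \mathrm{load}+1) & \text{if } u\in D,\\ (b+1,\ d,\ \mathrm{load}+b+1) & \text{if } u\notin D \text{ and } u\in R,\\ (b,\ d,\ \mathrm{load}+b) & \text{if } u\notin D \text{ and } u\notin R. \end{cases} \]
   Context: Setting (multicast with diffusing nodes): $A$ is a multicast tree for a request $(e,R)$: a tree rooted at the source $e$, arcs directed away from $e$, whose leaves lie in the destination set $R$. A set $D\subseteq V(A)$ is a set of diffusing (branching) nodes. The solution $\mathcal{S}(D)$ is a set of directed paths in $A$ such that: every node of $R$ is the final extremity of exactly one path; every node of $D$ is the final extremity of at most one path; the origin of each path is either $e$ or a node of $D$ which is itself the final extremity of some path; a node of $D$ lies on a path only as its origin or final extremity. As in the paper, $\mathcal{S}(D)$ is taken to be the solution in which each vertex $x\neq e$ of $R\cup D$ is the final extremity of exactly one path, whose origin is the nearest proper ancestor of $x$ belonging to $D\cup\{e\}$. For a vertex $u$, $A^u$ is the subtree of $A$ rooted at $u$, and for $u\neq e$, $a^u$ is the arc joining the parent of $u$ to $u$. The path number $\mathrm{pn}(u)$ is the number of paths of $\mathcal{S}(D)$ that pass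 through $u$ or terminate at $u$ (equivalently, that use the arc $a^u$). The window of $\mathcal{S}(D)$ on arc $a^u$ is the triple $(\mathrm{pn}(u),\ |D\cap V(A^u)|,\ \mathrm{load})$, where $\mathrm{load}=\sum_{w\in V(A^u)}\mathrm{pn}(w)$ is the load of $\mathcal{S}(D)$ in $A^u$, i.e. the number of pairs (path, arc) with the path using the arc, over the arcs of $A^u$ together with $a^u$. *)

theory Defs
  imports Main
begin

definition rooted_tree :: "'a set \<Rightarrow> ('a \<times> 'a) set \<Rightarrow> 'a \<Rightarrow> bool" where
  "rooted_tree V E e \<longleftrightarrow> finite V \<and> e \<in> V \<and> E \<subseteq> V \<times> V
     \<and> (\<forall>v\<in>V. (e, v) \<in> E\<^sup>*)
     \<and> (\<forall>x. (x, e) \<notin> E)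
     \<and> (\<forall>v\<in>V - {e}. \<exists>!p. (p, v) \<in> E)"

definition children :: "('a \<times> 'a) set \<Rightarrow> 'a \<Rightarrow> 'a set" where
  "children E u = {v. (u, v) \<in> E}"

definition leaves :: "'a set \<Rightarrow> ('a \<times> 'a) set \<Rightarrow> 'a set" where
  "leaves V E = {v \<in> V. children E v = {}}"

definition subtree :: "('a \<times> 'a) set \<Rightarrow> 'a \<Rightarrow> 'a set" where
  "subtree E u = {v. (u, v) \<in> E\<^sup>*}"

text \<open>Origin of the path of S(D) ending at x: nearest proper ancestor of x in D \<union> {e}.\<close>
definition origin :: "('a \<times> 'a) set \<Rightarrow> 'a \<Rightarrow> 'a set \<Rightarrow> 'a \<Rightarrow> 'a" where
  "origin E e D x = (THE w. w \<in> D \<union> {e} \<and> (w, x) \<in> E\<^sup>+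
      \<and> (\<forall>w'. w' \<in> D \<union> {e} \<and> (w', x) \<in> E\<^sup>+ \<longrightarrow> (w', w) \<in> E\<^sup>*))"

text \<open>Path number pn(u): the number of paths of S(D) using the arc a^u. The path of S(D)
  ending at x (for x \<in> (R \<union> D) - {e}) goes from origin x to x and uses the arc a^y
  exactly for origin x \<prec> y \<preceq> x.\<close>
definition pn :: "'a set \<Rightarrow> ('a \<times> 'a) set \<Rightarrow> 'a \<Rightarrow> 'a set \<Rightarrow> 'a set \<Rightarrow> 'a \<Rightarrow> nat" where
  "pn V E e R D u = card {x \<in> (R \<union> D) - {e}. (origin E e D x, u) \<in> E\<^sup>+ \<and> (u, x) \<in> E\<^sup>*}"

definition window :: "'a set \<Rightarrow> ('a \<times> 'a) set \<Rightarrow> 'a \<Rightarrow> 'a set \<Rightarrow> 'a set \<Rightarrow> 'a \<Rightarrow> nat \<times> nat \<times> nat" where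
  "window V E e R D u = (pn V E e R D u, card (D \<inter> subtree E u),
      (\<Sum>w\<in>subtree E u. pn V E e R D w))"

end

theory Submission
  imports Defs
begin

lemma rtE: assumes "rooted_tree V E e" shows "E \<subseteq> V \<times> V"
  using assms unfolding rooted_tree_def by (elim conjE)
lemma rtfin: assumes "rooted_tree V E e" shows "finite V"
  using assms unfolding rooted_tree_def by (elim conjE)
lemma rteV: assumes "rooted_tree V E e" shows "e \<in> V"
  using assms unfolding rooted_tree_def by (elim conjE)
lemma rtreach: assumes "rooted_tree V E e" "v \<in> V" shows "(e, v) \<in> E\<^sup>*"
  using assms unfolding rooted_tree_def by (elim conjE) blast
lemma rtnoe: assumes "rooted_tree V E e" shows "(x, e) \<notin> E"
  using assms unfolding rooted_tree_def by (elim conjE) blast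
lemma rtuniq: assumes "rooted_tree V E e" "v \<in> V" "v \<noteq> e" shows "\<exists>!p. (p, v) \<in> E"
  using assms unfolding rooted_tree_def by (elim conjE) blast
lemma rtEV1: assumes "rooted_tree V E e" "(a, b) \<in> E" shows "a \<in> V"
  using rtE[OF assms(1)] assms(2) by blast
lemma rtEV2: assumes "rooted_tree V E e" "(a, b) \<in> E" shows "b \<in> V"
  using rtE[OF assms(1)] assms(2) by blast

lemma rt_reach_V:
  assumes "rooted_tree V E e" "(a, b) \<in> E\<^sup>*" "a \<in> V"
  shows "b \<in> V"
  using assms(2,3)
  by (induction rule: rtrancl_induct) (auto intro: rtEV2[OF assms(1)])

lemma rt_parent:
  assumes "rooted_tree V E e" "(p, v) \<in> E" "(q, v) \<in> E"
  shows "p = q"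
proof -
  have "v \<in> V" "v \<noteq> e" using rtEV2[OF assms(1,2)] rtnoe[OF assms(1)] assms(2) by auto
  thus ?thesis using assms rtuniq[OF assms(1)] by blast
qed

lemma rt_trancl_parent:
  assumes "rooted_tree V E e" "(w, v) \<in> E\<^sup>+" "(p, v) \<in> E"
  shows "(w, p) \<in> E\<^sup>*"
  using assms(2)
proof (cases rule: tranclE)
  case base
  then show ?thesis using rt_parent[OF assms(1) _ assms(3)] by auto
next
  case (step c)
  then show ?thesis using rt_parent[OF assms(1) _ assms(3)] by auto
qed

lemma rt_reach_props:
  assumes "rooted_tree V E e" "(e, v) \<in> E\<^sup>*"
  shows "(v, v) \<notin> E\<^sup>+ \<and> (\<forall>w1 w2. (w1, v) \<in> E\<^sup>* \<and> (w2, v) \<in> E\<^sup>* \<longrightarrow> (w1, w2) \<in> E\<^sup>* \<or> (w2, w1) \<in> E\<^sup>*)"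
  using assms(2)
proof (induction rule: rtrancl_induct)
  case base
  have ne: "\<And>x. (x, e) \<notin> E" using rtnoe[OF assms(1)] by blast
  have 1: "(e, e) \<notin> E\<^sup>+" using ne by (metis tranclE)
  have "\<And>w. (w, e) \<in> E\<^sup>* \<Longrightarrow> w = e" using ne by (metis rtranclE)
  then show ?case using 1 by auto
next
  case (step y z)
  have anc: "\<And>w. (w, z) \<in> E\<^sup>* \<Longrightarrow> w = z \<or> (w, y) \<in> E\<^sup>*"
  proof -
    fix w assume "(w, z) \<in> E\<^sup>*"
    then show "w = z \<or> (w, y) \<in> E\<^sup>*"
    proof (cases rule: rtranclE)
      case (step c)
      then show ?thesis using rt_parent[OF assms(1) step(2) \<open>(y,z)\<in>E\<close>] by auto
    qed auto
  qed
  have "(z, z) \<notin> E\<^sup>+"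
  proof
    assume "(z, z) \<in> E\<^sup>+"
    then have "(z, y) \<in> E\<^sup>*" using rt_trancl_parent[OF assms(1) _ step(2)] by auto
    then have "(y, y) \<in> E\<^sup>+" using step(2) by (meson rtrancl_into_trancl2)
    then show False using step(3) by auto
  qed
  moreover have "\<forall>w1 w2. (w1, z) \<in> E\<^sup>* \<and> (w2, z) \<in> E\<^sup>* \<longrightarrow> (w1, w2) \<in> E\<^sup>* \<or> (w2, w1) \<in> E\<^sup>*"
  proof (intro allI impI)
    fix w1 w2 assume h: "(w1, z) \<in> E\<^sup>* \<and> (w2, z) \<in> E\<^sup>*"
    show "(w1, w2) \<in> E\<^sup>* \<or> (w2, w1) \<in> E\<^sup>*"
      using anc[of w1] anc[of w2] h step(3) by blast
  qed
  ultimately show ?case by blast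
qed

lemma rt_acyclic:
  assumes "rooted_tree V E e"
  shows "(v, v) \<notin> E\<^sup>+"
proof
  assume h: "(v, v) \<in> E\<^sup>+"
  then obtain c where "(c, v) \<in> E" by (rule tranclE) auto
  then have "v \<in> V" using rtEV2[OF assms] by blast
  then have "(e, v) \<in> E\<^sup>*" using rtreach[OF assms] by blast
  then show False using rt_reach_props[OF assms] h by blast
qed

lemma rt_anc_V:
  assumes "rooted_tree V E e" "(w, v) \<in> E\<^sup>+"
  shows "w \<in> V"
proof -
  obtain c where "(w, c) \<in> E" using assms(2) by (rule converse_tranclE) auto
  then show ?thesis using rtEV1[OF assms(1)] by blast
qed

lemma origin_prop:
  assumes rt: "rooted_tree V E e" and "D \<subseteq> V" and x: "x \<in> V" "x \<noteq> e"
  shows "origin E e D x \<in> D \<union> {e} \<and> (origin E e D x, x) \<in> E\<^sup>+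
     \<and> (\<forall>w'. w' \<in> D \<union> {e} \<and> (w', x) \<in> E\<^sup>+ \<longrightarrow> (w', origin E e D x) \<in> E\<^sup>*)"
proof -
  define S where "S = {w \<in> D \<union> {e}. (w, x) \<in> E\<^sup>+}"
  have ex: "(e, x) \<in> E\<^sup>*" using rtreach[OF rt x(1)] .
  then have "(e, x) \<in> E\<^sup>+" using x by (metis rtranclD)
  then have "e \<in> S" unfolding S_def by auto
  have finV: "finite V" using rtfin[OF rt] .
  have "e \<in> V" using rteV[OF rt] .
  then have SV: "S \<subseteq> V" using \<open>D \<subseteq> V\<close> unfolding S_def by blast
  then have finS: "finite S" using finV finite_subset by auto
  have chain: "\<And>w1 w2. w1 \<in> S \<Longrightarrow> w2 \<in> S \<Longrightarrow> (w1, w2) \<in> E\<^sup>* \<or> (w2, w1) \<in> E\<^sup>*"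
  proof -
    fix w1 w2 assume "w1 \<in> S" "w2 \<in> S"
    then have "(w1, x) \<in> E\<^sup>*" "(w2, x) \<in> E\<^sup>*" unfolding S_def by auto
    then show "(w1, w2) \<in> E\<^sup>* \<or> (w2, w1) \<in> E\<^sup>*" using rt_reach_props[OF rt ex] by blast
  qed
  define f where "f w = card {w'. (w', w) \<in> E\<^sup>*}" for w
  have ancfin: "finite {w'. (w', w) \<in> E\<^sup>*}" if "w \<in> V" for w
  proof -
    have "{w'. (w', w) \<in> E\<^sup>*} \<subseteq> V"
    proof
      fix a assume "a \<in> {w'. (w', w) \<in> E\<^sup>*}"
      then have "(a, w) \<in> E\<^sup>*" by simp
      then have "a = w \<or> (a, w) \<in> E\<^sup>+" by (metis rtranclD)
      then show "a \<in> V" using that rt_anc_V[OF rt, of a w] by metis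
    qed
    then show ?thesis using finV by (rule finite_subset)
  qed
  obtain w where w: "w \<in> S" "f w = Max (f ` S)"
  proof -
    have "Max (f ` S) \<in> f ` S" using finS \<open>e \<in> S\<close> by (intro Max_in) auto
    then obtain w0 where "w0 \<in> S" "Max (f ` S) = f w0" by (rule imageE)
    then show ?thesis using that by simp
  qed
  have great: "(w', w) \<in> E\<^sup>*" if "w' \<in> S" for w'
  proof (rule ccontr)
    assume n: "(w', w) \<notin> E\<^sup>*"
    then have ww': "(w, w') \<in> E\<^sup>+" using chain[OF w(1) that] by (metis rtranclD)
    have sub: "{a. (a, w) \<in> E\<^sup>*} \<subset> {a. (a, w') \<in> E\<^sup>*}"
    proof
      show "{a. (a, w) \<in> E\<^sup>*} \<subseteq> {a. (a, w') \<in> E\<^sup>*}"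
      proof
        fix a assume "a \<in> {a. (a, w) \<in> E\<^sup>*}"
        then have "(a, w) \<in> E\<^sup>*" by simp
        moreover have "(w, w') \<in> E\<^sup>*" using ww' by (rule trancl_into_rtrancl)
        ultimately show "a \<in> {a. (a, w') \<in> E\<^sup>*}" by (simp add: rtrancl_trans[of a w E w'])
      qed
      have "w' \<in> {a. (a, w') \<in> E\<^sup>*}" by simp
      moreover have "w' \<notin> {a. (a, w) \<in> E\<^sup>*}" using n by simp
      ultimately show "{a. (a, w) \<in> E\<^sup>*} \<noteq> {a. (a, w') \<in> E\<^sup>*}" by blast
    qed
    have "w' \<in> V" using SV that by blast
    then have "f w < f w'" unfolding f_def
      using psubset_card_mono[OF ancfin[of w'] sub] by simp
    moreover have "f w' \<le> Max (f ` S)" using finS that by simp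
    ultimately show False using w(2) by linarith
  qed
  have P: "w \<in> D \<union> {e} \<and> (w, x) \<in> E\<^sup>+ \<and> (\<forall>w'. w' \<in> D \<union> {e} \<and> (w', x) \<in> E\<^sup>+ \<longrightarrow> (w', w) \<in> E\<^sup>*)"
    using w(1) great unfolding S_def by auto
  have U: "w2 = w" if "w2 \<in> D \<union> {e} \<and> (w2, x) \<in> E\<^sup>+ \<and> (\<forall>w'. w' \<in> D \<union> {e} \<and> (w', x) \<in> E\<^sup>+ \<longrightarrow> (w', w2) \<in> E\<^sup>*)" for w2
  proof (rule ccontr)
    assume ne: "w2 \<noteq> w"
    have "(w, w2) \<in> E\<^sup>*" "(w2, w) \<in> E\<^sup>*" using that P by auto
    then have "(w, w) \<in> E\<^sup>+" using ne by (meson rtranclD rtrancl_trancl_trancl)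
    then show False using rt_acyclic[OF rt] by auto
  qed
  have "origin E e D x = w" unfolding origin_def
    apply (rule the_equality)
     apply (rule P)
    apply (erule U)
    done
  then show ?thesis using P by simp
qed

theorem lemma1:
  fixes V :: "'a set" and E :: "('a \<times> 'a) set" and e u u1 :: 'a and R D :: "'a set"
    and b d load :: nat
  assumes "rooted_tree V E e"
    and "R \<subseteq> V" and "leaves V E \<subseteq> R"
    and "D \<subseteq> V"
    and "u \<in> V" and "u \<noteq> e"
    and "children E u = {u1}"
    and "window V E e R D u1 = (b, d, load)"
  shows "window V E e R D u =
    (if u \<in> D then (1, d + 1, load + 1)
     else if u \<in> R then (b + 1, d, load + b + 1)
     else (b, d, load + b))"
proof -
  note rt = assms(1)
  have uu1: "(u, u1) \<in> E" using assms(7) unfolding children_def by auto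
  have u1V: "u1 \<in> V" using rt_reach_V[OF rt _ assms(5), of u1] uu1 by auto
  have ne_e: "(x, e) \<notin> E" for x using rtnoe[OF rt] by blast
  have u1e: "u1 \<noteq> e" using uu1 ne_e by auto
  have nu1u: "(u1, u) \<notin> E\<^sup>*"
  proof
    assume "(u1, u) \<in> E\<^sup>*"
    then have "(u, u) \<in> E\<^sup>+" using uu1 by (meson rtrancl_into_trancl2)
    then show False using rt_acyclic[OF rt] by auto
  qed
  have sub: "subtree E u = insert u (subtree E u1)"
  proof
    show "subtree E u \<subseteq> insert u (subtree E u1)"
    proof
      fix v assume "v \<in> subtree E u"
      then have "(u, v) \<in> E\<^sup>*" unfolding subtree_def by auto
      then show "v \<in> insert u (subtree E u1)"
      proof (cases rule: converse_rtranclE)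
        case (step c)
        then have "c = u1" using assms(7) unfolding children_def by auto
        then show ?thesis using step unfolding subtree_def by auto
      qed auto
    qed
    show "insert u (subtree E u1) \<subseteq> subtree E u"
      using uu1 unfolding subtree_def by (auto intro: converse_rtrancl_into_rtrancl)
  qed
  have nin: "u \<notin> subtree E u1" using nu1u unfolding subtree_def by auto
  have finsub: "finite (subtree E u1)"
  proof -
    have "subtree E u1 \<subseteq> V" unfolding subtree_def using rt_reach_V[OF rt _ u1V] by auto
    then show ?thesis using rtfin[OF rt] finite_subset by blast
  qed
  have xV: "x \<in> V" "x \<noteq> e" if "(u1, x) \<in> E\<^sup>*" for x
  proof -
    show "x \<in> V" using rt_reach_V[OF rt that u1V] .
    show "x \<noteq> e"
    proof
      assume "x = e"
      then show False using that u1e ne_e by (metis rtranclE)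
    qed
  qed
  have ou: "origin E e D u \<in> D \<union> {e} \<and> (origin E e D u, u) \<in> E\<^sup>+"
    using origin_prop[OF rt assms(4) assms(5) assms(6)] by auto
  have reach: "(u, x) \<in> E\<^sup>* \<longleftrightarrow> x = u \<or> (u1, x) \<in> E\<^sup>*" for x
    using sub unfolding subtree_def by auto
  have w1: "pn V E e R D u1 = b" "card (D \<inter> subtree E u1) = d"
    "(\<Sum>w\<in>subtree E u1. pn V E e R D w) = load"
    using assms(8) unfolding window_def by auto
  have cardD: "card (D \<inter> subtree E u) = (if u \<in> D then d + 1 else d)"
  proof -
    have "D \<inter> subtree E u = (if u \<in> D then insert u (D \<inter> subtree E u1) else D \<inter> subtree E u1)"
      using sub by auto
    moreover have "u \<notin> D \<inter> subtree E u1" using nin by auto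
    moreover have "finite (D \<inter> subtree E u1)" using finsub by auto
    ultimately show ?thesis using w1(2) by simp
  qed
  define S1 where "S1 = {x \<in> (R \<union> D) - {e}. (origin E e D x, u1) \<in> E\<^sup>+ \<and> (u1, x) \<in> E\<^sup>*}"
  have "S1 \<subseteq> subtree E u1" unfolding S1_def subtree_def by auto
  then have finS1: "finite S1" using finsub finite_subset by blast
  have S1b: "card S1 = b" using w1(1) unfolding pn_def S1_def by simp
  have uS1: "u \<notin> S1" using nu1u unfolding S1_def by auto
  have pnu: "pn V E e R D u = (if u \<in> D then 1 else if u \<in> R then b + 1 else b)"
  proof (cases "u \<in> D")
    case True
    have "{x \<in> (R \<union> D) - {e}. (origin E e D x, u) \<in> E\<^sup>+ \<and> (u, x) \<in> E\<^sup>*} = {u}"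
    proof (intro equalityI subsetI)
      fix x assume h: "x \<in> {x \<in> (R \<union> D) - {e}. (origin E e D x, u) \<in> E\<^sup>+ \<and> (u, x) \<in> E\<^sup>*}"
      show "x \<in> {u}"
      proof (rule ccontr)
        assume "x \<notin> {u}"
        then have ux: "(u1, x) \<in> E\<^sup>*" using h reach by auto
        then have "(u, x) \<in> E\<^sup>+" using uu1 by (meson rtrancl_into_trancl2)
        then have "(u, origin E e D x) \<in> E\<^sup>*"
          using origin_prop[OF rt assms(4) xV[OF ux]] True by auto
        then have "(u, u) \<in> E\<^sup>+" using h by auto
        then show False using rt_acyclic[OF rt] by auto
      qed
    qed (use True assms(6) ou in auto)
    then show ?thesis using True unfolding pn_def by simp
  next
    case False
    have eq: "{x \<in> (R \<union> D) - {e}. (origin E e D x, u) \<in> E\<^sup>+ \<and> (u, x) \<in> E\<^sup>*}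
       = S1 \<union> (if u \<in> R then {u} else {})"
    proof (intro equalityI subsetI)
      fix x assume h: "x \<in> {x \<in> (R \<union> D) - {e}. (origin E e D x, u) \<in> E\<^sup>+ \<and> (u, x) \<in> E\<^sup>*}"
      show "x \<in> S1 \<union> (if u \<in> R then {u} else {})"
      proof (cases "x = u")
        case True then show ?thesis using h False by auto
      next
        case nx: False
        then have "(u1, x) \<in> E\<^sup>*" using h reach by auto
        moreover have "(origin E e D x, u1) \<in> E\<^sup>+" using h uu1 by auto
        ultimately show ?thesis using h unfolding S1_def by auto
      qed
    next
      fix x assume h: "x \<in> S1 \<union> (if u \<in> R then {u} else {})"
      show "x \<in> {x \<in> (R \<union> D) - {e}. (origin E e D x, u) \<in> E\<^sup>+ \<and> (u, x) \<in> E\<^sup>*}"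
      proof (cases "x \<in> S1")
        case True
        then have ux: "(u1, x) \<in> E\<^sup>*" and o1: "(origin E e D x, u1) \<in> E\<^sup>+" unfolding S1_def by auto
        have "origin E e D x \<in> D \<union> {e}" using origin_prop[OF rt assms(4) xV[OF ux]] by auto
        then have "origin E e D x \<noteq> u" using False assms(6) by auto
        moreover have "(origin E e D x, u) \<in> E\<^sup>*" using rt_trancl_parent[OF rt o1 uu1] .
        ultimately have "(origin E e D x, u) \<in> E\<^sup>+" by (meson rtranclD)
        then show ?thesis using True reach ux unfolding S1_def by auto
      next
        case nS: False
        then have "x = u" "u \<in> R" using h by (auto split: if_splits)
        then show ?thesis using ou assms(6) by auto
      qed
    qed
    show ?thesis using False unfolding pn_def eq using finS1 uS1 S1b by auto
  qed
  have loadu: "(\<Sum>w\<in>subtree E u. pn V E e R D w) = pn V E e R D u + load"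
    using sub nin finsub w1(3) by simp
  show ?thesis unfolding window_def using pnu cardD loadu by auto
qed

end
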